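(* Let $m\ge 2$ and let $n_1,\dots,n_m\ge 4$ be even integers. Then the partition dimension of the even chain cycle $\mathcal{C}(C_{n_1},\dots,C_{n_m})$ equals $3$.
   Context: Let $C_{n_1},\dots,C_{n_m}$ be pairwise disjoint cycles, $V(C_{n_i})=\{v^i_1,\dots,v^i_{n_i}\}$ with $v^i_j$ adjacent to $v^i_{j+1}$ (indices mod $n_i$). The even chain cycle $\mathcal{C}(C_{n_1},\dots,C_{n_m})$ (all $n_i$ even) is obtained from the disjoint union of these cycles by identifying $v^i_{n_i/2+1}$ with $v^{i+1}_1$ for each $i=1,\dots,m-1$. For an ordered partition $\Pi=\{Q_1,\dots,Q_k\}$ of $V(G)$, $r(v\mid\Pi)=(d(v,Q_1),\dots,d(v,Q_k))$ where $d(v,Q)=\min_{q\in Q}d(v,q)$; $\Pi$ is resolving if distinct vertices have distinct representations; the partition dimension $pd(G)$ is the minimum $k$ for which a resolving $k$-partition exists. *)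

theory Defs
  imports Main
begin

definition is_walk :: "'a set \<Rightarrow> ('a \<Rightarrow> 'a \<Rightarrow> bool) \<Rightarrow> 'a list \<Rightarrow> 'a \<Rightarrow> 'a \<Rightarrow> bool" where
  "is_walk V E p x y \<longleftrightarrow> p \<noteq> [] \<and> hd p = x \<and> last p = y \<and> set p \<subseteq> V \<and>
     (\<forall>i. Suc i < length p \<longrightarrow> E (p ! i) (p ! Suc i))"

text \<open>Shortest-path distance (graphs considered here are connected).\<close>
definition gdist :: "'a set \<Rightarrow> ('a \<Rightarrow> 'a \<Rightarrow> bool) \<Rightarrow> 'a \<Rightarrow> 'a \<Rightarrow> nat" where
  "gdist V E x y = (LEAST k. \<exists>p. is_walk V E p x y \<and> length p = Suc k)"

definition setdist :: "'a set \<Rightarrow> ('a \<Rightarrow> 'a \<Rightarrow> bool) \<Rightarrow> 'a \<Rightarrow> 'a set \<Rightarrow> nat" where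
  "setdist V E v Q = Min (gdist V E v ` Q)"

definition ordered_partition :: "'a set \<Rightarrow> 'a set list \<Rightarrow> bool" where
  "ordered_partition V Qs \<longleftrightarrow> (\<forall>Q\<in>set Qs. Q \<noteq> {}) \<and>
     (\<forall>i<length Qs. \<forall>j<length Qs. i \<noteq> j \<longrightarrow> Qs ! i \<inter> Qs ! j = {}) \<and> \<Union>(set Qs) = V"

definition representation :: "'a set \<Rightarrow> ('a \<Rightarrow> 'a \<Rightarrow> bool) \<Rightarrow> 'a set list \<Rightarrow> 'a \<Rightarrow> nat list" where
  "representation V E Qs v = map (setdist V E v) Qs"

definition resolving_partition :: "'a set \<Rightarrow> ('a \<Rightarrow> 'a \<Rightarrow> bool) \<Rightarrow> 'a set list \<Rightarrow> bool" where
  "resolving_partition V E Qs \<longleftrightarrow> ordered_partition V Qs \<and> inj_on (representation V E Qs) V"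

definition partition_dimension :: "'a set \<Rightarrow> ('a \<Rightarrow> 'a \<Rightarrow> bool) \<Rightarrow> nat" where
  "partition_dimension V E = (LEAST k. \<exists>Qs. length Qs = k \<and> resolving_partition V E Qs)"

text \<open>The cycles are given by the list ns = [n_1,...,n_m] (0-indexed: cycle i has length ns!i).
  Vertex v^i_j (1-indexed j) is represented by the pair (i, j-1).  The vertex v^{i+1}_1,
  i.e. the pair (i+1, 0), is identified with v^i_{n_i/2+1}, i.e. the pair (i, n_i div 2);
  canon maps each pair to its class representative.\<close>
definition canon :: "nat list \<Rightarrow> nat \<times> nat \<Rightarrow> nat \<times> nat" where
  "canon ns v = (case v of (i, j) \<Rightarrow>
     if 0 < i \<and> j = 0 then (i - 1, ns ! (i - 1) div 2) else (i, j))"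

definition chain_V :: "nat list \<Rightarrow> (nat \<times> nat) set" where
  "chain_V ns = {canon ns (i, j) | i j. i < length ns \<and> j < ns ! i}"

definition chain_E :: "nat list \<Rightarrow> nat \<times> nat \<Rightarrow> nat \<times> nat \<Rightarrow> bool" where
  "chain_E ns x y \<longleftrightarrow> (\<exists>i j. i < length ns \<and> j < ns ! i \<and>
     ((x = canon ns (i, j) \<and> y = canon ns (i, Suc j mod ns ! i)) \<or>
      (y = canon ns (i, j) \<and> x = canon ns (i, Suc j mod ns ! i))))"

end

theory Submission
  imports Defs
begin


lemma is_walk_single: "is_walk V E [a] x y \<longleftrightarrow> a = x \<and> a = y \<and> a \<in> V"
  by (auto simp: is_walk_def)

lemma is_walk_Cons2: "is_walk V E (a # b # p) x y \<longleftrightarrow>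
   a = x \<and> a \<in> V \<and> E a b \<and> is_walk V E (b # p) b y"
proof
  assume h: "is_walk V E (a # b # p) x y"
  have "\<forall>i. Suc i < length (b#p) \<longrightarrow> E ((b#p) ! i) ((b#p) ! Suc i)"
  proof (intro allI impI)
    fix i assume "Suc i < length (b#p)"
    then have "Suc (Suc i) < length (a#b#p)" by simp
    with h have "E ((a#b#p) ! Suc i) ((a#b#p) ! Suc (Suc i))" unfolding is_walk_def by blast
    then show "E ((b#p) ! i) ((b#p) ! Suc i)" by simp
  qed
  moreover have "E a b" using h unfolding is_walk_def by (metis length_Cons nth_Cons_0 nth_Cons_Suc zero_less_Suc Suc_less_eq)
  ultimately show "a = x \<and> a \<in> V \<and> E a b \<and> is_walk V E (b # p) b y"
    using h unfolding is_walk_def by auto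
next
  assume h: "a = x \<and> a \<in> V \<and> E a b \<and> is_walk V E (b # p) b y"
  have "\<forall>i. Suc i < length (a#b#p) \<longrightarrow> E ((a#b#p) ! i) ((a#b#p) ! Suc i)"
  proof (intro allI impI)
    fix i assume i: "Suc i < length (a#b#p)"
    show "E ((a#b#p) ! i) ((a#b#p) ! Suc i)"
    proof (cases i)
      case 0 then show ?thesis using h by auto
    next
      case (Suc k)
      then have "Suc k < length (b#p)" using i by simp
      with h have "E ((b#p) ! k) ((b#p) ! Suc k)" unfolding is_walk_def by blast
      then show ?thesis using Suc by simp
    qed
  qed
  then show "is_walk V E (a # b # p) x y" using h unfolding is_walk_def by auto
qed

lemma is_walk_prepend: "is_walk V E p w y \<Longrightarrow> u \<in> V \<Longrightarrow> E u w \<Longrightarrow> is_walk V E (u # p) u y"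
proof -
  assume h: "is_walk V E p w y" "u \<in> V" "E u w"
  then obtain b p' where p: "p = b # p'" unfolding is_walk_def by (cases p) auto
  then have "b = w" using h unfolding is_walk_def by simp
  then show ?thesis using h p is_walk_Cons2 by metis
qed

lemma is_walk_snoc: "is_walk V E p x y \<Longrightarrow> E y z \<Longrightarrow> z \<in> V \<Longrightarrow> is_walk V E (p @ [z]) x z"
proof -
  assume h: "is_walk V E p x y" "E y z" "z \<in> V"
  have ne: "p \<noteq> []" using h unfolding is_walk_def by simp
  have "\<forall>i. Suc i < length (p@[z]) \<longrightarrow> E ((p@[z]) ! i) ((p@[z]) ! Suc i)"
  proof (intro allI impI)
    fix i assume i: "Suc i < length (p@[z])"
    show "E ((p@[z]) ! i) ((p@[z]) ! Suc i)"
    proof (cases "Suc i < length p")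
      case True
      then have "E (p ! i) (p ! Suc i)" using h unfolding is_walk_def by blast
      then show ?thesis using True by (simp add: nth_append)
    next
      case False
      then have e: "Suc i = length p" using i by simp
      then have "p ! i = y" using h ne unfolding is_walk_def by (metis diff_Suc_1 last_conv_nth)
      then show ?thesis using e h by (simp add: nth_append)
    qed
  qed
  then show ?thesis using h ne unfolding is_walk_def by auto
qed

lemma walk_lip: "is_walk V E p v y \<Longrightarrow> (\<And>a b. E a b \<Longrightarrow> f a \<le> f b + (1::nat)) \<Longrightarrow> f v \<le> f y + (length p - 1)"
proof (induction p arbitrary: v)
  case Nil then show ?case by (simp add: is_walk_def)
next
  case (Cons a p)
  show ?case
  proof (cases p)
    case Nil then show ?thesis using Cons.prems by (auto simp add: is_walk_single)
  next
    case (Cons b p')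
    then have "a = v" "E a b" "is_walk V E p b y" using Cons.prems is_walk_Cons2 by metis+
    moreover have "f b \<le> f y + (length p - 1)" using Cons.IH[of b] Cons.prems(2) calculation by blast
    ultimately show ?thesis using Cons.prems(2)[of a b] Cons by simp
  qed
qed

lemma gdist_le: "is_walk V E p x y \<Longrightarrow> gdist V E x y \<le> length p - 1"
  unfolding gdist_def
  by (rule Least_le) (metis One_nat_def Suc_pred is_walk_def length_greater_0_conv)

lemma gdist_ex: "is_walk V E p x y \<Longrightarrow> \<exists>q. is_walk V E q x y \<and> length q = Suc (gdist V E x y)"
  unfolding gdist_def
  by (rule LeastI_ex) (metis One_nat_def Suc_pred is_walk_def length_greater_0_conv)

lemma gdist_self: "x \<in> V \<Longrightarrow> gdist V E x x = 0"
  using gdist_le[of V E "[x]" x x] by (simp add: is_walk_single)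

lemma gdist_zero: "is_walk V E p x y \<Longrightarrow> gdist V E x y = 0 \<Longrightarrow> x = y"
  using gdist_ex[of V E p x y] by (auto simp: is_walk_def length_Suc_conv)

lemma gdist_step: "is_walk V E p w y \<Longrightarrow> u \<in> V \<Longrightarrow> E u w \<Longrightarrow> gdist V E u y \<le> gdist V E w y + 1"
proof -
  assume h: "is_walk V E p w y" "u \<in> V" "E u w"
  obtain q where q: "is_walk V E q w y" "length q = Suc (gdist V E w y)" using gdist_ex[OF h(1)] by blast
  have "is_walk V E (u#q) u y" using is_walk_prepend[OF q(1) h(2,3)] .
  from gdist_le[OF this] q(2) show ?thesis by simp
qed

lemma setdist_le: "finite Q \<Longrightarrow> q \<in> Q \<Longrightarrow> setdist V E v Q \<le> gdist V E v q"
  unfolding setdist_def by (rule Min_le) auto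

lemma setdist_ex: "finite Q \<Longrightarrow> Q \<noteq> {} \<Longrightarrow> \<exists>q\<in>Q. setdist V E v Q = gdist V E v q"
proof -
  assume "finite Q" "Q \<noteq> {}"
  then have "Min (gdist V E v ` Q) \<in> gdist V E v ` Q" by (intro Min_in) auto
  then show ?thesis unfolding setdist_def by auto
qed

lemma setdist_zero:
  assumes conn: "\<forall>a\<in>V. \<forall>b\<in>V. \<exists>p. is_walk V E p a b"
    and "finite Q" "Q \<subseteq> V" "v \<in> V" "Q \<noteq> {}"
  shows "setdist V E v Q = 0 \<longleftrightarrow> v \<in> Q"
proof
  assume h: "setdist V E v Q = 0"
  obtain q where q: "q \<in> Q" "setdist V E v Q = gdist V E v q" using setdist_ex[OF assms(2) assms(5)] by blast
  then have "q \<in> V" using assms(3) by blast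
  then obtain p where "is_walk V E p v q" using conn assms(4) by blast
  then have "v = q" using gdist_zero[of V E p v q] q h by simp
  then show "v \<in> Q" using q by simp
next
  assume "v \<in> Q"
  then have "setdist V E v Q \<le> gdist V E v v" using setdist_le[of Q v V E v] assms(2) by blast
  then show "setdist V E v Q = 0" using gdist_self[of v V E] assms(4) by simp
qed

lemma setdist_step:
  assumes conn: "\<forall>a\<in>V. \<forall>b\<in>V. \<exists>p. is_walk V E p a b"
    and "finite Q" "Q \<subseteq> V" "Q \<noteq> {}" "u \<in> V" "w \<in> V" "E u w"
  shows "setdist V E u Q \<le> setdist V E w Q + 1"
proof -
  obtain q where q: "q \<in> Q" "setdist V E w Q = gdist V E w q" using setdist_ex[OF assms(2) assms(4)] by blast
  then have "q \<in> V" using assms(3) by blast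
  then obtain p where p: "is_walk V E p w q" using conn assms(6) by blast
  have "setdist V E u Q \<le> gdist V E u q" using setdist_le[of Q q V E u] assms(2) q(1) by blast
  also have "\<dots> \<le> gdist V E w q + 1" using gdist_step[OF p assms(5,7)] .
  finally show ?thesis using q by simp
qed



definition Sx :: "nat list \<Rightarrow> nat \<Rightarrow> nat" where "Sx ns i = (\<Sum>k<i. ns!k div 2)"
definition pos :: "nat list \<Rightarrow> nat \<times> nat \<Rightarrow> nat" where
  "pos ns v = Sx ns (fst v) + min (snd v) (ns ! fst v - snd v)"

lemma Sx_Suc: "Sx ns (Suc i) = Sx ns i + ns!i div 2"
  by (simp add: Sx_def)

lemma Sx_mono: "i \<le> i' \<Longrightarrow> Sx ns i \<le> Sx ns i'"
  unfolding Sx_def by (rule sum_mono2) auto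

context
  fixes ns :: "nat list"
  assumes H: "\<forall>n\<in>set ns. even n \<and> n \<ge> 4"
begin

lemma nthH: "i < length ns \<Longrightarrow> even (ns!i) \<and> ns!i \<ge> 4"
  using H nth_mem by blast

lemma canon_id: "i = 0 \<or> j \<noteq> 0 \<Longrightarrow> canon ns (i,j) = (i,j)"
  unfolding canon_def by auto

lemma chain_V_iff: "v \<in> chain_V ns \<longleftrightarrow> fst v < length ns \<and> snd v < ns ! fst v \<and> (fst v = 0 \<or> snd v \<noteq> 0)"
proof
  assume "v \<in> chain_V ns"
  then obtain i j where ij: "v = canon ns (i,j)" "i < length ns" "j < ns!i" unfolding chain_V_def by blast
  show "fst v < length ns \<and> snd v < ns ! fst v \<and> (fst v = 0 \<or> snd v \<noteq> 0)"
  proof (cases "0 < i \<and> j = 0")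
    case True
    then have v: "v = (i - 1, ns!(i-1) div 2)" using ij unfolding canon_def by simp
    have "i - 1 < length ns" using ij by simp
    then have "even (ns!(i-1)) \<and> ns!(i-1) \<ge> 4" using nthH by blast
    then show ?thesis using v ij by auto
  next
    case False
    then have "v = (i,j)" using ij unfolding canon_def by auto
    then show ?thesis using ij False by auto
  qed
next
  assume h: "fst v < length ns \<and> snd v < ns ! fst v \<and> (fst v = 0 \<or> snd v \<noteq> 0)"
  obtain i j where v: "v = (i,j)" by (cases v)
  then have "canon ns (i,j) = v" using canon_id h by simp
  then have "\<exists>i' j'. v = canon ns (i',j') \<and> i' < length ns \<and> j' < ns!i'"
    using h v by (intro exI[of _ i] exI[of _ j]) auto
  then show "v \<in> chain_V ns" unfolding chain_V_def by blast
qed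

lemma canon_in: "i < length ns \<Longrightarrow> j < ns!i \<Longrightarrow> canon ns (i,j) \<in> chain_V ns"
  unfolding chain_V_def by blast

lemma pos_canon: "i < length ns \<Longrightarrow> pos ns (canon ns (i,j)) = pos ns (i,j)"
proof (cases "0 < i \<and> j = 0")
  case True
  assume i: "i < length ns"
  then have "even (ns!(i-1))" using nthH[of "i-1"] by auto
  then have e: "ns!(i-1) - ns!(i-1) div 2 = ns!(i-1) div 2" by auto
  have "Sx ns i = Sx ns (i-1) + ns!(i-1) div 2" using Sx_Suc[of ns "i-1"] True by simp
  then show ?thesis using True e unfolding canon_def pos_def by simp
next
  case False
  then show ?thesis unfolding canon_def by auto
qed

lemma E_sym: "chain_E ns a b \<Longrightarrow> chain_E ns b a"
  unfolding chain_E_def by blast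

lemma E_V: "chain_E ns a b \<Longrightarrow> a \<in> chain_V ns \<and> b \<in> chain_V ns"
proof -
  assume "chain_E ns a b"
  then obtain i j where ij: "i < length ns" "j < ns!i"
    "(a = canon ns (i, j) \<and> b = canon ns (i, Suc j mod ns ! i)) \<or>
      (b = canon ns (i, j) \<and> a = canon ns (i, Suc j mod ns ! i))" unfolding chain_E_def by blast
  have "Suc j mod ns!i < ns!i" using ij(2) by simp
  then show ?thesis using ij canon_in by blast
qed

lemma min_step: "j < (n::nat) \<Longrightarrow> min j (n - j) \<le> min (Suc j mod n) (n - Suc j mod n) + 1
   \<and> min (Suc j mod n) (n - Suc j mod n) \<le> min j (n - j) + 1"
proof (cases "Suc j < n")
  case True then show ?thesis by (auto simp: min_def)
next
  case False
  assume "j < n"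
  then have "Suc j = n" using False by simp
  then have "Suc j mod n = 0" by simp
  then show ?thesis using \<open>Suc j = n\<close> by (auto simp: min_def)
qed

lemma pos_edge: "chain_E ns a b \<Longrightarrow> pos ns a \<le> pos ns b + 1"
proof -
  assume "chain_E ns a b"
  then obtain i j where ij: "i < length ns" "j < ns!i"
    "(a = canon ns (i, j) \<and> b = canon ns (i, Suc j mod ns ! i)) \<or>
      (b = canon ns (i, j) \<and> a = canon ns (i, Suc j mod ns ! i))" unfolding chain_E_def by blast
  have p1: "pos ns (canon ns (i,j)) = Sx ns i + min j (ns!i - j)" using pos_canon ij(1) unfolding pos_def by simp
  have p2: "pos ns (canon ns (i,Suc j mod ns!i)) = Sx ns i + min (Suc j mod ns!i) (ns!i - Suc j mod ns!i)"
    using pos_canon ij(1) unfolding pos_def by simp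
  show ?thesis using ij(3) p1 p2 min_step[OF ij(2)] by auto
qed

lemma descent: "v \<in> chain_V ns \<Longrightarrow> v \<noteq> (0,0) \<Longrightarrow> \<exists>u\<in>chain_V ns. chain_E ns v u \<and> pos ns u + 1 = pos ns v"
proof -
  assume vV: "v \<in> chain_V ns" and vx: "v \<noteq> (0,0)"
  obtain i j where v: "v = (i,j)" by (cases v)
  have h: "i < length ns" "j < ns!i" "i = 0 \<or> j \<noteq> 0" using vV chain_V_iff v by auto
  have j1: "j \<ge> 1" using h(3) vx v by auto
  define n where "n = ns!i"
  have n: "even n" "n \<ge> 4" using nthH[OF h(1)] n_def by auto
  have cv: "canon ns (i,j) = v" using canon_id h(3) v by simp
  have pv: "pos ns v = Sx ns i + min j (n - j)" using v n_def pos_def by simp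
  show ?thesis
  proof (cases "j \<le> n div 2")
    case True
    define u where "u = canon ns (i, j - 1)"
    have uV: "u \<in> chain_V ns" using canon_in h u_def by simp
    have "Suc (j-1) mod n = j" using j1 h(2) n_def by simp
    then have "chain_E ns v u" unfolding chain_E_def using h cv u_def n_def
      by (metis diff_less less_one less_trans j1 zero_less_iff_neq_zero le_eq_less_or_eq)
    moreover have "pos ns u = Sx ns i + (j - 1)" using pos_canon[OF h(1)] u_def True n_def unfolding pos_def by auto
    moreover have "pos ns v = Sx ns i + j" using pv True by auto
    ultimately show ?thesis using uV j1 by auto
  next
    case False
    define u where "u = canon ns (i, Suc j mod n)"
    have uV: "u \<in> chain_V ns" using canon_in h u_def n_def by simp
    have "chain_E ns v u" unfolding chain_E_def using h cv u_def n_def by blast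
    moreover have "pos ns u = Sx ns i + (n - j - 1)"
    proof (cases "Suc j < n")
      case True
      then show ?thesis using pos_canon[OF h(1)] u_def False n_def unfolding pos_def by auto
    next
      case False
      then have "Suc j = n" using h(2) n_def by simp
      then show ?thesis using pos_canon[OF h(1)] u_def n_def unfolding pos_def by auto
    qed
    moreover have "pos ns v = Sx ns i + (n - j)" using pv False by auto
    ultimately show ?thesis using uV False h(2) n_def by auto
  qed
qed

lemma x_in: "ns \<noteq> [] \<Longrightarrow> (0,0) \<in> chain_V ns"
  using chain_V_iff nthH by fastforce

lemma pos_x: "pos ns (0,0) = 0"
  unfolding pos_def Sx_def by simp

lemma walk_to_x: "ns \<noteq> [] \<Longrightarrow> v \<in> chain_V ns \<Longrightarrow>
   \<exists>p. is_walk (chain_V ns) (chain_E ns) p v (0,0) \<and> length p = Suc (pos ns v)"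
proof (induction "pos ns v" arbitrary: v)
  case 0
  then have "v = (0,0)" using descent by fastforce
  then show ?case using 0 x_in[OF 0(2)] by (intro exI[of _ "[v]"]) (simp add: is_walk_single)
next
  case (Suc k)
  then have "v \<noteq> (0,0)" using pos_x by auto
  then obtain u where u: "u \<in> chain_V ns" "chain_E ns v u" "pos ns u + 1 = pos ns v" using descent Suc by blast
  then obtain p where p: "is_walk (chain_V ns) (chain_E ns) p u (0,0)" "length p = Suc (pos ns u)"
    using Suc by (metis add_right_cancel plus_1_eq_Suc add.commute)
  then show ?case using is_walk_prepend[OF p(1) Suc.prems(2) u(2)] u(3) by (intro exI[of _ "v#p"]) simp
qed

lemma conn: "ns \<noteq> [] \<Longrightarrow> \<forall>a\<in>chain_V ns. \<forall>b\<in>chain_V ns. \<exists>p. is_walk (chain_V ns) (chain_E ns) p a b"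
proof (intro ballI)
  fix a b assume ne: "ns \<noteq> []" and a: "a \<in> chain_V ns" and b: "b \<in> chain_V ns"
  show "\<exists>p. is_walk (chain_V ns) (chain_E ns) p a b" using b
  proof (induction "pos ns b" arbitrary: b)
    case 0
    then have "b = (0,0)" using descent by fastforce
    then show ?case using walk_to_x[OF ne a] by blast
  next
    case (Suc k)
    then have "b \<noteq> (0,0)" using pos_x by auto
    then obtain u where u: "u \<in> chain_V ns" "chain_E ns b u" "pos ns u + 1 = pos ns b" using descent Suc by blast
    then obtain p where p: "is_walk (chain_V ns) (chain_E ns) p a u"
      using Suc by (metis add_right_cancel plus_1_eq_Suc add.commute)
    show ?case using is_walk_snoc[OF p E_sym[OF u(2)] Suc.prems] by blast
  qed
qed

lemma gdist_x: "ns \<noteq> [] \<Longrightarrow> v \<in> chain_V ns \<Longrightarrow> gdist (chain_V ns) (chain_E ns) v (0,0) = pos ns v"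
proof -
  assume ne: "ns \<noteq> []" and v: "v \<in> chain_V ns"
  obtain p where p: "is_walk (chain_V ns) (chain_E ns) p v (0,0)" "length p = Suc (pos ns v)"
    using walk_to_x[OF ne v] by blast
  have le: "gdist (chain_V ns) (chain_E ns) v (0,0) \<le> pos ns v" using gdist_le[OF p(1)] p(2) by simp
  obtain q where q: "is_walk (chain_V ns) (chain_E ns) q v (0,0)" "length q = Suc (gdist (chain_V ns) (chain_E ns) v (0,0))"
    using gdist_ex[OF p(1)] by blast
  have "pos ns v \<le> pos ns (0,0) + (length q - 1)" using walk_lip[OF q(1), of "pos ns"] pos_edge by blast
  then show ?thesis using le q(2) pos_x by simp
qed

end


lemma two_class:
  assumes conn: "\<forall>a\<in>V. \<forall>b\<in>V. \<exists>p. is_walk V E p a b"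
    and fA: "finite A" and fB: "finite B" and AV: "A \<subseteq> V" and BV: "B \<subseteq> V"
    and Ane: "A \<noteq> {}" and Bne: "B \<noteq> {}" and disj: "A \<inter> B = {}" and un: "A \<union> B = V"
    and inj: "inj_on (\<lambda>u. (setdist V E u A, setdist V E u B)) V"
    and wA: "w \<in> A" and uV: "u \<in> V" and e1: "E u w" and e2: "E w u" and uw: "u \<noteq> w"
  shows "(setdist V E u A, setdist V E u B) \<in>
     {(0, setdist V E w B - 1), (0, setdist V E w B + 1), (1, 0)}"
proof -
  have wV: "w \<in> V" using wA AV by blast
  have swA: "setdist V E w A = 0" using setdist_zero[OF conn fA AV wV Ane] wA by simp
  show ?thesis
  proof (cases "u \<in> A")
    case True
    have suA: "setdist V E u A = 0" using setdist_zero[OF conn fA AV uV Ane] True by simp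
    have s1: "setdist V E u B \<le> setdist V E w B + 1" using setdist_step[OF conn fB BV Bne uV wV e1] .
    have s2: "setdist V E w B \<le> setdist V E u B + 1" using setdist_step[OF conn fB BV Bne wV uV e2] .
    have "(setdist V E u A, setdist V E u B) \<noteq> (setdist V E w A, setdist V E w B)"
      using inj uV wV uw unfolding inj_on_def by blast
    then have "setdist V E u B \<noteq> setdist V E w B" using suA swA by simp
    then show ?thesis using s1 s2 suA by auto
  next
    case False
    then have uB: "u \<in> B" using un uV by blast
    have suB: "setdist V E u B = 0" using setdist_zero[OF conn fB BV uV Bne] uB by simp
    have suA: "setdist V E u A \<noteq> 0" using setdist_zero[OF conn fA AV uV Ane] False by simp
    have "setdist V E u A \<le> setdist V E w A + 1" using setdist_step[OF conn fA AV Ane uV wV e1] .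
    then show ?thesis using suA suB swA by auto
  qed
qed

lemma four_nb:
  assumes conn: "\<forall>a\<in>V. \<forall>b\<in>V. \<exists>p. is_walk V E p a b"
    and fA: "finite A" and fB: "finite B" and AV: "A \<subseteq> V" and BV: "B \<subseteq> V"
    and Ane: "A \<noteq> {}" and Bne: "B \<noteq> {}" and disj: "A \<inter> B = {}" and un: "A \<union> B = V"
    and inj: "inj_on (\<lambda>u. (setdist V E u A, setdist V E u B)) V"
    and wA: "w \<in> A"
    and nb: "\<And>u. u \<in> U \<Longrightarrow> u \<in> V \<and> E u w \<and> E w u \<and> u \<noteq> w"
    and cU: "card U = 4" 
  shows False
proof -
  let ?g = "\<lambda>u. (setdist V E u A, setdist V E u B)"
  let ?T = "{(0, setdist V E w B - 1), (0, setdist V E w B + 1), (1::nat, 0::nat)}"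
  have UV: "U \<subseteq> V" using nb by blast
  have "?g ` U \<subseteq> ?T" using two_class[OF conn fA fB AV BV Ane Bne disj un inj wA] nb by blast
  then have "card (?g ` U) \<le> card ?T" by (intro card_mono) auto
  also have "card ?T \<le> 3" by (auto simp: card_insert_if)
  finally have "card (?g ` U) \<le> 3" .
  moreover have "card (?g ` U) = card U" using inj_on_subset[OF inj UV] by (rule card_image)
  ultimately show False using cU by simp
qed



definition Q1 :: "nat list \<Rightarrow> (nat \<times> nat) set" where
  "Q1 ns = {v \<in> chain_V ns. 0 < snd v \<and> snd v < ns ! fst v div 2}"
definition Q2 :: "nat list \<Rightarrow> (nat \<times> nat) set" where
  "Q2 ns = {v \<in> chain_V ns. v \<noteq> (0,0) \<and> \<not> (0 < snd v \<and> snd v < ns ! fst v div 2)}"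

lemma block: "Sx ns i < p \<Longrightarrow> p \<le> Sx ns (Suc i) \<Longrightarrow> Sx ns i' < p \<Longrightarrow> p \<le> Sx ns (Suc i') \<Longrightarrow> i = i'"
proof (rule ccontr)
  assume h: "Sx ns i < p" "p \<le> Sx ns (Suc i)" "Sx ns i' < p" "p \<le> Sx ns (Suc i')" "i \<noteq> i'"
  show False
  proof (cases "i < i'")
    case True
    then have "Sx ns (Suc i) \<le> Sx ns i'" by (intro Sx_mono) simp
    then show False using h by simp
  next
    case False
    then have "Sx ns (Suc i') \<le> Sx ns i" using h(5) by (intro Sx_mono) simp
    then show False using h by simp
  qed
qed

lemma finite_V: "finite (chain_V ns)"
proof -
  have "chain_V ns = canon ns ` (SIGMA i:{..<length ns}. {..<ns!i})" unfolding chain_V_def by auto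
  then show ?thesis by simp
qed

context
  fixes ns :: "nat list"
  assumes H: "\<forall>n\<in>set ns. even n \<and> n \<ge> 4"
begin

lemma Q1_pos: "u \<in> Q1 ns \<Longrightarrow> Sx ns (fst u) < pos ns u \<and> pos ns u \<le> Sx ns (Suc (fst u)) \<and> pos ns u = Sx ns (fst u) + snd u"
  unfolding Q1_def pos_def Sx_Suc by auto

lemma Q2_pos: "u \<in> Q2 ns \<Longrightarrow> Sx ns (fst u) < pos ns u \<and> pos ns u \<le> Sx ns (Suc (fst u)) \<and> pos ns u = Sx ns (fst u) + (ns!fst u - snd u)"
proof -
  assume u: "u \<in> Q2 ns"
  then have V: "fst u < length ns" "snd u < ns ! fst u" "fst u = 0 \<or> snd u \<noteq> 0" using chain_V_iff[OF H] unfolding Q2_def by auto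
  have "snd u \<noteq> 0" using V(3) u unfolding Q2_def by (cases u) auto
  then have "snd u \<ge> ns!fst u div 2" using u unfolding Q2_def by auto
  moreover have "even (ns ! fst u)" using nthH[OF H V(1)] by simp
  ultimately show ?thesis using V \<open>snd u \<noteq> 0\<close> unfolding pos_def Sx_Suc by auto
qed

lemma Q1_inj: "u \<in> Q1 ns \<Longrightarrow> v \<in> Q1 ns \<Longrightarrow> pos ns u = pos ns v \<Longrightarrow> u = v"
proof -
  assume h: "u \<in> Q1 ns" "v \<in> Q1 ns" "pos ns u = pos ns v"
  have "fst u = fst v" using block Q1_pos[OF h(1)] Q1_pos[OF h(2)] h(3) by metis
  then show ?thesis using Q1_pos[OF h(1)] Q1_pos[OF h(2)] h(3) by (simp add: prod_eq_iff)
qed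

lemma Q2_inj: "u \<in> Q2 ns \<Longrightarrow> v \<in> Q2 ns \<Longrightarrow> pos ns u = pos ns v \<Longrightarrow> u = v"
proof -
  assume h: "u \<in> Q2 ns" "v \<in> Q2 ns" "pos ns u = pos ns v"
  have f: "fst u = fst v" using block Q2_pos[OF h(1)] Q2_pos[OF h(2)] h(3) by metis
  have "snd u < ns ! fst u" "snd v < ns ! fst v" using h chain_V_iff[OF H] unfolding Q2_def by auto
  moreover have e: "ns!fst u - snd u = ns!fst v - snd v" using f Q2_pos[OF h(1)] Q2_pos[OF h(2)] h(3) by (metis add_left_cancel)
  ultimately have "snd u = snd v" using f by simp
  then show ?thesis using f by (simp add: prod_eq_iff)
qed

end


theorem theorem2p3:
  fixes ns :: "nat list"
  assumes "length ns \<ge> 2"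
    and "\<forall>n\<in>set ns. even n \<and> n \<ge> 4"
  shows "partition_dimension (chain_V ns) (chain_E ns) = 3"
proof -
  note H = assms(2)
  let ?V = "chain_V ns" and ?E = "chain_E ns"
  have ne: "ns \<noteq> []" using assms(1) by auto
  have cn: "\<forall>a\<in>?V. \<forall>b\<in>?V. \<exists>p. is_walk ?V ?E p a b" using conn[OF H ne] .
  have fV: "finite ?V" by (rule finite_V)
  have n0: "even (ns!0)" "ns!0 \<ge> 4" using nthH[OF H, of 0] ne by auto
  have n1: "even (ns!1)" "ns!1 \<ge> 4" using nthH[OF H, of 1] assms(1) by auto
  have xV: "(0,0) \<in> ?V" using x_in[OF H ne] .
  have q1: "(0,1) \<in> Q1 ns" unfolding Q1_def using chain_V_iff[OF H] ne n0 by auto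
  have q2: "(0, ns!0 div 2) \<in> Q2 ns" unfolding Q2_def using chain_V_iff[OF H] ne n0 by auto
  have Q1V: "Q1 ns \<subseteq> ?V" and Q2V: "Q2 ns \<subseteq> ?V" unfolding Q1_def Q2_def by auto
  have fQ1: "finite (Q1 ns)" and fQ2: "finite (Q2 ns)" using Q1V Q2V fV finite_subset by auto
  let ?Qs = "[Q1 ns, Q2 ns, {(0,0)}]"
  have op: "ordered_partition ?V ?Qs"
  proof -
    have "\<forall>Q\<in>set ?Qs. Q \<noteq> {}" using q1 q2 by auto
    moreover have "\<forall>i<length ?Qs. \<forall>j<length ?Qs. i \<noteq> j \<longrightarrow> ?Qs ! i \<inter> ?Qs ! j = {}"
    proof (intro allI impI)
      fix i j assume "i < length ?Qs" "j < length ?Qs" "i \<noteq> j"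
      then have "i = 0 \<or> i = 1 \<or> i = 2" "j = 0 \<or> j = 1 \<or> j = 2" by auto
      then show "?Qs ! i \<inter> ?Qs ! j = {}" using \<open>i \<noteq> j\<close> unfolding Q1_def Q2_def by auto
    qed
    moreover have "\<Union>(set ?Qs) = ?V" using xV unfolding Q1_def Q2_def by auto
    ultimately show ?thesis unfolding ordered_partition_def by blast
  qed
  have sx: "\<And>v. v \<in> ?V \<Longrightarrow> setdist ?V ?E v {(0,0)} = pos ns v"
    unfolding setdist_def using gdist_x[OF H ne] by simp
  have z1: "\<And>v. v \<in> ?V \<Longrightarrow> setdist ?V ?E v (Q1 ns) = 0 \<longleftrightarrow> v \<in> Q1 ns"
    using setdist_zero[OF cn fQ1 Q1V] q1 by blast
  have z2: "\<And>v. v \<in> ?V \<Longrightarrow> setdist ?V ?E v (Q2 ns) = 0 \<longleftrightarrow> v \<in> Q2 ns"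
    using setdist_zero[OF cn fQ2 Q2V] q2 by blast
  have inj: "inj_on (representation ?V ?E ?Qs) ?V"
  proof (rule inj_onI)
    fix u v assume uV: "u \<in> ?V" and vV: "v \<in> ?V" and r: "representation ?V ?E ?Qs u = representation ?V ?E ?Qs v"
    then have e1: "setdist ?V ?E u (Q1 ns) = setdist ?V ?E v (Q1 ns)"
      and e2: "setdist ?V ?E u (Q2 ns) = setdist ?V ?E v (Q2 ns)"
      and e3: "pos ns u = pos ns v" unfolding representation_def using sx by auto
    have "u \<in> Q1 ns \<or> u \<in> Q2 ns \<or> u = (0,0)" using uV unfolding Q1_def Q2_def by auto
    moreover {
      assume "u \<in> Q1 ns"
      then have "v \<in> Q1 ns" using z1 uV vV e1 by metis
      then have "u = v" using Q1_inj[OF H] \<open>u \<in> Q1 ns\<close> e3 by blast }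
    moreover {
      assume "u \<in> Q2 ns"
      then have "v \<in> Q2 ns" using z2 uV vV e2 by metis
      then have "u = v" using Q2_inj[OF H] \<open>u \<in> Q2 ns\<close> e3 by blast }
    moreover {
      assume "u = (0,0)"
      then have "pos ns v = 0" using e3 pos_x[OF H] by simp
      then have "v = (0,0)" using descent[OF H vV] by fastforce
      then have "u = v" using \<open>u = (0,0)\<close> by simp }
    ultimately show "u = v" by blast
  qed
  have res3: "resolving_partition ?V ?E ?Qs" unfolding resolving_partition_def using op inj by blast
  have lower: "\<And>Qs. resolving_partition ?V ?E Qs \<Longrightarrow> 3 \<le> length Qs"
  proof (rule ccontr)
    fix Qs assume rp: "resolving_partition ?V ?E Qs" and lt: "\<not> 3 \<le> length Qs"
    have opQ: "ordered_partition ?V Qs" and injQ: "inj_on (representation ?V ?E Qs) ?V"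
      using rp unfolding resolving_partition_def by auto
    have "length Qs = 0 \<or> length Qs = 1 \<or> length Qs = 2" using lt by linarith
    moreover {
      assume "length Qs = 0"
      then have False using opQ xV unfolding ordered_partition_def by auto }
    moreover {
      assume "length Qs = 1"
      then obtain Q where Q: "Qs = [Q]" by (metis One_nat_def length_0_conv length_Suc_conv)
      then have QV: "Q = ?V" using opQ unfolding ordered_partition_def by auto
      have y: "(0,1) \<in> ?V" using q1 Q1V by blast
      have "\<And>v. v \<in> ?V \<Longrightarrow> representation ?V ?E Qs v = [0]"
        unfolding representation_def Q QV using setdist_zero[OF cn fV subset_refl] xV by auto
      then have "(0,0) = (0::nat,1::nat)" using injQ xV y unfolding inj_on_def by metis
      then have False by simp }
    moreover {
      assume "length Qs = 2"
      then obtain A B where AB: "Qs = [A, B]"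
        by (metis (no_types, lifting) Suc_length_conv numeral_2_eq_2 length_0_conv)
      have op2: "(\<forall>Q\<in>set Qs. Q \<noteq> {})" "(\<forall>i<length Qs. \<forall>j<length Qs. i \<noteq> j \<longrightarrow> Qs ! i \<inter> Qs ! j = {})"
         "\<Union>(set Qs) = ?V" using opQ unfolding ordered_partition_def by auto
      have Ane: "A \<noteq> {}" and Bne: "B \<noteq> {}" and un: "A \<union> B = ?V" using op2(1,3) AB by auto
      have "Qs ! 0 \<inter> Qs ! 1 = {}" using op2(2) AB by (metis One_nat_def length_Cons list.size(3) lessI zero_less_Suc zero_neq_one)
      then have disj: "A \<inter> B = {}" using AB by simp
      have AV: "A \<subseteq> ?V" and BV: "B \<subseteq> ?V" using un by auto
      have fA: "finite A" and fB: "finite B" using AV BV fV finite_subset by auto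
      have injAB: "inj_on (\<lambda>u. (setdist ?V ?E u A, setdist ?V ?E u B)) ?V"
        using injQ unfolding inj_on_def representation_def AB by auto
      have injBA: "inj_on (\<lambda>u. (setdist ?V ?E u B, setdist ?V ?E u A)) ?V"
        using injQ unfolding inj_on_def representation_def AB by auto
      define h where "h = ns!0 div 2"
      have h2: "h \<ge> 2" "Suc h < ns!0" using n0 h_def by auto
      define w where "w = (0::nat, h)"
      define U :: "(nat \<times> nat) set" where "U = {(0, h - 1), (0, Suc h), (1, 1), (1, ns!1 - 1)}"
      have cU: "card U = 4" unfolding U_def using h2 n1 by (auto simp: card_insert_if)
      have c10: "canon ns (1,0) = w" unfolding canon_def w_def h_def by simp
      have wV: "w \<in> ?V" using q2 Q2V unfolding w_def h_def by blast
      have l1: "length ns > 1" using assms(1) by simp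
      have E1: "?E (0, h - 1) w" unfolding chain_E_def w_def
        apply (rule exI[of _ 0], rule exI[of _ "h - 1"]) using h2 ne by (auto simp: canon_def)
      have E2: "?E w (0, Suc h)" unfolding chain_E_def w_def
        apply (rule exI[of _ 0], rule exI[of _ h]) using h2 ne by (auto simp: canon_def)
      have E3: "?E w (1, 1)" unfolding chain_E_def
        apply (rule exI[of _ 1], rule exI[of _ 0]) using n1 l1 c10 by (auto simp: canon_def)
      have E4: "?E (1, ns!1 - 1) w" unfolding chain_E_def
        apply (rule exI[of _ 1], rule exI[of _ "ns!1 - 1"]) using n1 l1 c10 by (auto simp: canon_def)
      have nb: "\<And>u. u \<in> U \<Longrightarrow> u \<in> ?V \<and> ?E u w \<and> ?E w u \<and> u \<noteq> w"
      proof -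
        fix u assume "u \<in> U"
        then have "?E u w" unfolding U_def using E1 E_sym[OF H E2] E_sym[OF H E3] E4 by auto
        moreover have "u \<noteq> w" using \<open>u \<in> U\<close> h2 unfolding U_def w_def by auto
        ultimately show "u \<in> ?V \<and> ?E u w \<and> ?E w u \<and> u \<noteq> w" using E_V[OF H] E_sym[OF H] by blast
      qed
      have False
      proof (cases "w \<in> A")
        case True
        show False using four_nb[OF cn fA fB AV BV Ane Bne disj un injAB True nb cU] .
      next
        case False
        then have wB: "w \<in> B" using un wV by blast
        have disj': "B \<inter> A = {}" and un': "B \<union> A = ?V" using disj un by auto
        show False using four_nb[OF cn fB fA BV AV Bne Ane disj' un' injBA wB nb cU] .
      qed }
    ultimately show False by blast
  qed
  show ?thesis unfolding partition_dimension_def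
  proof (rule Least_equality)
    show "\<exists>Qs. length Qs = 3 \<and> resolving_partition ?V ?E Qs" using res3 by (intro exI[of _ ?Qs]) simp
  next
    fix k assume "\<exists>Qs. length Qs = k \<and> resolving_partition ?V ?E Qs"
    then show "3 \<le> k" using lower by blast
  qed
qed


end
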